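(* Assume $d(\eta,\cdot)$ attains its minimum over $\mathcal G$ at $g^*$. Then $\inf_{g\in\mathcal G^\circ_{ds}}d(\eta,g)=d(\eta,g^* )$, and for every OCDS prediction $g^{ds}\in\mathcal G^\circ_{ds}$, $$d(\eta,g^{ds})=d(\eta,g^* )+d(g^*,g^{ds}).$$ If in addition $b^*_j\in(0,1)$ for all $j\le p$ and $w^*_\ell\in(0,1)$ for all $\ell$, then with $g^{ds*}=g^{ds}(w^*,b^*_{1:p})$, $$d(g^*,g^{ds})=\big[d(\eta,g^{ds*})-d(\eta,g^* )\big]+\big[d(\eta,g^{ds})-d(\eta,g^{ds*})\big],$$ where the first bracket is nonnegative.
   Context: Standard setup. Let $n\ge1$, $k\ge2$, $p\ge1$ be integers and $m=p+k$. There are $n$ data points $x_1,\dots,x_n$ and $p$ rules $h^{(1)},\dots,h^{(p)}$, each a map from $\{x_1,\dots,x_n\}$ to $\{1,\dots,k\}\cup\{?\}$, where "?" means abstain. Let $n_j\ge1$ be the number of indices $i$ with $h^{(j)}(x_i)\neq ?$. $\Delta_k$ denotes the probability simplex in $\mathbb{R}^k$; an element $z\in\Delta_k^n\subset\mathbb{R}^{nk}$ is written $z=(z_1,\dots,z_n)$ with $z_i=(z_{i1},\dots,z_{ik})\in\Delta_k$. For $j\le p$ let $h^{(j)}\in\{0,1\}^{nk}$ also denote the vector with $h^{(j)}_{i\ell}=1$ iff $h^{(j)}(x_i)=\ell$; for $\ell\le k$ let $\vec e^{\,n}_\ell\in\{0,1\}^{nk}$ have entries $(\vec e^{\,n}_\ell)_{i\ell'}=\mathbf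 1(\ell'=\ell)$. The matrix $A\in\mathbb{R}^{m\times nk}$ has rows $a^{(j)}=h^{(j)}/n_j$ for $1\le j\le p$ and $a^{(p+\ell)}=\vec e^{\,n}_\ell/n$ for $1\le\ell\le k$. For $\theta\in\mathbb{R}^m$ put $a^{(\theta)}=A^\top\theta\in\mathbb{R}^{nk}$ (entries $a^{(\theta)}_{i\ell}$) and define $g^{(\theta)}\in\Delta_k^n$ by $g^{(\theta)}_{i\ell}=\exp(a^{(\theta)}_{i\ell})/\sum_{\ell'=1}^k\exp(a^{(\theta)}_{i\ell'})$; let $\mathcal G=\{g^{(\theta)}:\theta\in\mathbb{R}^m\}$. A fixed "true labeling" $\eta\in\Delta_k^n$ is given and $b^*:=A\eta\in\mathbb{R}^m$; write $b^*_j$ ($j\le p$) for the empirical rule accuracies and $w^*_\ell:=b^*_{p+\ell}$ ($\ell\le k$) for the empirical class frequencies. For $\mu,\nu\in\Delta_k^n$, $d(\mu,\nu)=\sum_{i=1}^n\mathrm{KL}(\mu_i\|\nu_i)=\sum_{i,\ell}\mu_{i\ell}\log(\mu_{i\ell}/\nu_{i\ell})$, with $0\log(0/x)=0$. One-coin Dawid–Skene (OCDS) prediction: for class frequencies $w\in\Delta_k$ and rule accuracies $b\in(0,1)^p$, $g^{ds}(w,b)\in\Delta_k^n$ is defined by $g^{ds}(w,b)_{i\ell}=\widehat g_{i\ell}/\sum_{\ell'}\widehat g_{i\ell'}$ where $\widehat g_{i\ell}=w_\ell\prod_{j:\,h^{(j)}(x_i)=\ell}b_j\prod_{j:\,h^{(j)}(x_i)\notin\{\ell,?\}}\frac{1-b_j}{k-1}$.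 $\mathcal G^\circ_{ds}=\{g^{ds}(w,b):\ w\in\Delta_k,\ 0<w_\ell<1\ \forall\ell,\ b\in(0,1)^p\}$. *)

theory Defs
  imports Complex_Main
begin

text \<open>Conventions (0-based): data points are indexed by i < n, classes by l < k,
rules by j < p.  A rule set is h :: nat => nat => nat option, where
h j i = Some l means rule j assigns class l to x_i and h j i = None means abstain.
Elements of R^{nk} (and of Delta_k^n) are functions z :: nat => nat => real,
z i l being the (i,l) entry; theta in R^m is a function nat => real
(coordinates r < m = p + k).  Row j < p of A corresponds to rule j,
row p + l to class l.\<close>

definition nrule :: "nat \<Rightarrow> (nat \<Rightarrow> nat \<Rightarrow> nat option) \<Rightarrow> nat \<Rightarrow> nat" where
  "nrule n h j = card {i. i < n \<and> h j i \<noteq> None}"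

definition Amat :: "nat \<Rightarrow> nat \<Rightarrow> nat \<Rightarrow> (nat \<Rightarrow> nat \<Rightarrow> nat option)
    \<Rightarrow> nat \<Rightarrow> nat \<Rightarrow> nat \<Rightarrow> real" where
  "Amat n k p h r i l =
     (if r < p then (if h r i = Some l then 1 / real (nrule n h r) else 0)
      else if r < p + k then (if l = r - p then 1 / real n else 0)
      else 0)"

definition atheta :: "nat \<Rightarrow> nat \<Rightarrow> nat \<Rightarrow> (nat \<Rightarrow> nat \<Rightarrow> nat option)
    \<Rightarrow> (nat \<Rightarrow> real) \<Rightarrow> nat \<Rightarrow> nat \<Rightarrow> real" where
  "atheta n k p h \<theta> i l = (\<Sum>r<p + k. \<theta> r * Amat n k p h r i l)"

definition gtheta :: "nat \<Rightarrow> nat \<Rightarrow> nat \<Rightarrow> (nat \<Rightarrow> nat \<Rightarrow> nat option)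
    \<Rightarrow> (nat \<Rightarrow> real) \<Rightarrow> nat \<Rightarrow> nat \<Rightarrow> real" where
  "gtheta n k p h \<theta> i l =
     exp (atheta n k p h \<theta> i l) / (\<Sum>l'<k. exp (atheta n k p h \<theta> i l'))"

definition Gfam :: "nat \<Rightarrow> nat \<Rightarrow> nat \<Rightarrow> (nat \<Rightarrow> nat \<Rightarrow> nat option)
    \<Rightarrow> (nat \<Rightarrow> nat \<Rightarrow> real) set" where
  "Gfam n k p h = range (gtheta n k p h)"

definition bstar :: "nat \<Rightarrow> nat \<Rightarrow> nat \<Rightarrow> (nat \<Rightarrow> nat \<Rightarrow> nat option)
    \<Rightarrow> (nat \<Rightarrow> nat \<Rightarrow> real) \<Rightarrow> nat \<Rightarrow> real" where
  "bstar n k p h \<eta> r = (\<Sum>i<n. \<Sum>l<k. Amat n k p h r i l * \<eta> i l)"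

definition simplex :: "nat \<Rightarrow> (nat \<Rightarrow> real) \<Rightarrow> bool" where
  "simplex k v \<longleftrightarrow> (\<forall>l<k. 0 \<le> v l) \<and> (\<Sum>l<k. v l) = 1"

definition simplexn :: "nat \<Rightarrow> nat \<Rightarrow> (nat \<Rightarrow> nat \<Rightarrow> real) \<Rightarrow> bool" where
  "simplexn n k z \<longleftrightarrow> (\<forall>i<n. simplex k (z i))"

definition KLd :: "nat \<Rightarrow> nat \<Rightarrow> (nat \<Rightarrow> nat \<Rightarrow> real) \<Rightarrow> (nat \<Rightarrow> nat \<Rightarrow> real) \<Rightarrow> real" where
  "KLd n k \<mu> \<nu> =
     (\<Sum>i<n. \<Sum>l<k. (if \<mu> i l = 0 then 0 else \<mu> i l * ln (\<mu> i l / \<nu> i l)))"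

definition ghat :: "nat \<Rightarrow> nat \<Rightarrow> (nat \<Rightarrow> nat \<Rightarrow> nat option)
    \<Rightarrow> (nat \<Rightarrow> real) \<Rightarrow> (nat \<Rightarrow> real) \<Rightarrow> nat \<Rightarrow> nat \<Rightarrow> real" where
  "ghat k p h w b i l =
     w l * (\<Prod>j\<in>{j. j < p \<and> h j i = Some l}. b j)
         * (\<Prod>j\<in>{j. j < p \<and> h j i \<noteq> Some l \<and> h j i \<noteq> None}. (1 - b j) / (real k - 1))"

definition gds :: "nat \<Rightarrow> nat \<Rightarrow> (nat \<Rightarrow> nat \<Rightarrow> nat option)
    \<Rightarrow> (nat \<Rightarrow> real) \<Rightarrow> (nat \<Rightarrow> real) \<Rightarrow> nat \<Rightarrow> nat \<Rightarrow> real" where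
  "gds k p h w b i l = ghat k p h w b i l / (\<Sum>l'<k. ghat k p h w b i l')"

definition Gds_open :: "nat \<Rightarrow> nat \<Rightarrow> (nat \<Rightarrow> nat \<Rightarrow> nat option)
    \<Rightarrow> (nat \<Rightarrow> nat \<Rightarrow> real) set" where
  "Gds_open k p h = {gds k p h w b | w b. simplex k w \<and> (\<forall>l<k. 0 < w l \<and> w l < 1)
                                           \<and> (\<forall>j<p. 0 < b j \<and> b j < 1)}"

end

theory Submission
  imports Defs
begin

definition Zf where "Zf n k p h \<theta> i = (\<Sum>l'<k. exp (atheta n k p h \<theta> i l'))"
definition Ent where "Ent n k \<mu> = (\<Sum>i<n. \<Sum>l<k. (if \<mu> i l = 0 then 0 else \<mu> i l * ln (\<mu> i l)))"

lemma Zf_pos: "k \<ge> 1 \<Longrightarrow> Zf n k p h \<theta> i > 0"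
  unfolding Zf_def by (intro sum_pos) (auto simp: lessThan_empty_iff)

lemma gtheta_pos: "k \<ge> 1 \<Longrightarrow> gtheta n k p h \<theta> i l > 0"
  using Zf_pos[of k n p h \<theta> i] unfolding gtheta_def Zf_def by simp

lemma ln_gtheta: "k \<ge> 1 \<Longrightarrow> ln (gtheta n k p h \<theta> i l) = atheta n k p h \<theta> i l - ln (Zf n k p h \<theta> i)"
  using Zf_pos[of k n p h \<theta> i] unfolding gtheta_def Zf_def[symmetric] by (simp add: ln_div)

lemma KLd_split:
  assumes "\<forall>i<n. \<forall>l<k. 0 \<le> \<mu> i l \<and> 0 < \<nu> i l"
  shows "KLd n k \<mu> \<nu> = Ent n k \<mu> - (\<Sum>i<n. \<Sum>l<k. \<mu> i l * ln (\<nu> i l))"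
proof -
  have "KLd n k \<mu> \<nu> = (\<Sum>i<n. \<Sum>l<k. (if \<mu> i l = 0 then 0 else \<mu> i l * ln (\<mu> i l)) - \<mu> i l * ln (\<nu> i l))"
    unfolding KLd_def
  proof (intro sum.cong refl)
    fix i l assume "i \<in> {..<n}" "l \<in> {..<k}"
    then have a: "0 \<le> \<mu> i l" "0 < \<nu> i l" using assms by auto
    show "(if \<mu> i l = 0 then 0 else \<mu> i l * ln (\<mu> i l / \<nu> i l)) =
      (if \<mu> i l = 0 then 0 else \<mu> i l * ln (\<mu> i l)) - \<mu> i l * ln (\<nu> i l)"
    proof (cases "\<mu> i l = 0")
      case False with a have "\<mu> i l > 0" by simp
      with a False show ?thesis by (simp add: ln_div algebra_simps)
    qed simp
  qed
  then show ?thesis by (simp add: Ent_def sum_subtractf)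
qed

lemma KLd_cong2: "(\<forall>i<n. \<forall>l<k. \<nu> i l = \<nu>' i l) \<Longrightarrow> KLd n k \<mu> \<nu> = KLd n k \<mu> \<nu>'"
  unfolding KLd_def by (intro sum.cong refl) auto

lemma KLd_cong1: "(\<forall>i<n. \<forall>l<k. \<mu> i l = \<mu>' i l) \<Longrightarrow> KLd n k \<mu> \<nu> = KLd n k \<mu>' \<nu>"
  unfolding KLd_def by (intro sum.cong refl) auto

lemma sum_ln_gtheta:
  assumes "k \<ge> 1"
  shows "(\<Sum>i<n. \<Sum>l<k. x i l * ln (gtheta n k p h \<theta> i l)) =
     (\<Sum>r<p+k. \<theta> r * (\<Sum>i<n. \<Sum>l<k. Amat n k p h r i l * x i l))
     - (\<Sum>i<n. (\<Sum>l<k. x i l) * ln (Zf n k p h \<theta> i))"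
proof -
  have "(\<Sum>i<n. \<Sum>l<k. x i l * ln (gtheta n k p h \<theta> i l)) =
     (\<Sum>i<n. \<Sum>l<k. x i l * atheta n k p h \<theta> i l) - (\<Sum>i<n. \<Sum>l<k. x i l * ln (Zf n k p h \<theta> i))"
    by (simp add: ln_gtheta[OF assms] right_diff_distrib sum_subtractf)
  also have "(\<Sum>i<n. \<Sum>l<k. x i l * atheta n k p h \<theta> i l) = (\<Sum>i<n. \<Sum>l<k. \<Sum>r<p+k. \<theta> r * (Amat n k p h r i l * x i l))"
    unfolding atheta_def by (simp add: sum_distrib_left mult_ac)
  also have "\<dots> = (\<Sum>r<p+k. \<Sum>i<n. \<Sum>l<k. \<theta> r * (Amat n k p h r i l * x i l))"
    by (subst sum.swap) (simp add: sum.swap[of _ "{..<k}"])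
  also have "\<dots> = (\<Sum>r<p+k. \<theta> r * (\<Sum>i<n. \<Sum>l<k. Amat n k p h r i l * x i l))"
    by (simp add: sum_distrib_left)
  also have "(\<Sum>i<n. \<Sum>l<k. x i l * ln (Zf n k p h \<theta> i)) = (\<Sum>i<n. (\<Sum>l<k. x i l) * ln (Zf n k p h \<theta> i))"
    by (simp add: sum_distrib_right)
  finally show ?thesis .
qed

lemma sum_split_pk: "(\<Sum>r<p+k. f r) = (\<Sum>r<p. f r) + (\<Sum>s<k. f (p+s))" for f :: "nat \<Rightarrow> real"
  by (induction k) auto

lemma atheta_formula:
  assumes "l < k"
  shows "atheta n k p h \<theta> i l = (\<Sum>j\<in>{j. j < p \<and> h j i = Some l}. \<theta> j / real (nrule n h j)) + \<theta> (p+l) / real n"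
proof -
  have 1: "(\<Sum>r<p. \<theta> r * Amat n k p h r i l) = (\<Sum>j\<in>{j. j < p \<and> h j i = Some l}. \<theta> j / real (nrule n h j))"
  proof -
    have "{j. j < p \<and> h j i = Some l} = {j \<in> {..<p}. h j i = Some l}" by auto
    then have "(\<Sum>j\<in>{j. j < p \<and> h j i = Some l}. \<theta> j / real (nrule n h j))
       = (\<Sum>j<p. if h j i = Some l then \<theta> j / real (nrule n h j) else 0)"
      by (simp only: sum.inter_filter[OF finite_lessThan])
    moreover have "(\<Sum>r<p. \<theta> r * Amat n k p h r i l) = (\<Sum>j<p. if h j i = Some l then \<theta> j / real (nrule n h j) else 0)"
      by (intro sum.cong) (auto simp: Amat_def)
    ultimately show ?thesis by simp
  qed
  have 2: "(\<Sum>s<k. \<theta> (p+s) * Amat n k p h (p+s) i l) = \<theta> (p+l) / real n"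
  proof -
    have "(\<Sum>s<k. \<theta> (p+s) * Amat n k p h (p+s) i l) = (\<Sum>s<k. if s = l then \<theta> (p+l) / real n else 0)"
      by (intro sum.cong) (auto simp: Amat_def)
    then show ?thesis using assms by simp
  qed
  show ?thesis unfolding atheta_def sum_split_pk 1 2 ..
qed

lemma atheta_shift:
  assumes "r < p + k"
  shows "atheta n k p h (\<lambda>s. \<theta> s + (if s = r then t else 0)) i l = atheta n k p h \<theta> i l + t * Amat n k p h r i l"
proof -
  have "(\<Sum>s<p+k. (if s = r then t else 0) * Amat n k p h s i l) = (\<Sum>s<p+k. if s = r then t * Amat n k p h s i l else 0)"
    by (intro sum.cong) auto
  also have "\<dots> = t * Amat n k p h r i l" using assms by (simp add: sum.delta)
  finally have "(\<Sum>s<p+k. (if s = r then t else 0) * Amat n k p h s i l) = t * Amat n k p h r i l" .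
  then show ?thesis unfolding atheta_def by (simp add: distrib_right sum.distrib)
qed

lemma KLd_eta_gtheta:
  assumes "k \<ge> 1" "simplexn n k \<eta>"
  shows "KLd n k \<eta> (gtheta n k p h \<theta>) = Ent n k \<eta> - (\<Sum>i<n. \<Sum>l<k. \<eta> i l * atheta n k p h \<theta> i l) + (\<Sum>i<n. ln (Zf n k p h \<theta> i))"
proof -
  have pos: "\<forall>i<n. \<forall>l<k. 0 \<le> \<eta> i l \<and> 0 < gtheta n k p h \<theta> i l"
    using assms gtheta_pos[OF assms(1)] by (auto simp: simplexn_def simplex_def)
  have "(\<Sum>i<n. \<Sum>l<k. \<eta> i l * ln (gtheta n k p h \<theta> i l)) =
     (\<Sum>i<n. \<Sum>l<k. \<eta> i l * atheta n k p h \<theta> i l) - (\<Sum>i<n. (\<Sum>l<k. \<eta> i l) * ln (Zf n k p h \<theta> i))"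
    by (simp add: ln_gtheta[OF assms(1)] right_diff_distrib sum_subtractf sum_distrib_right)
  also have "(\<Sum>i<n. (\<Sum>l<k. \<eta> i l) * ln (Zf n k p h \<theta> i)) = (\<Sum>i<n. ln (Zf n k p h \<theta> i))"
    using assms(2) by (simp add: simplexn_def simplex_def)
  finally show ?thesis using KLd_split[OF pos] by simp
qed

lemma moment:
  assumes k1: "k \<ge> 1" and eta: "simplexn n k \<eta>"
    and min: "\<forall>g\<in>Gfam n k p h. KLd n k \<eta> (gtheta n k p h \<theta>0) \<le> KLd n k \<eta> g"
    and r: "r < p + k"
  shows "(\<Sum>i<n. \<Sum>l<k. Amat n k p h r i l * \<eta> i l) = (\<Sum>i<n. \<Sum>l<k. Amat n k p h r i l * gtheta n k p h \<theta>0 i l)"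
proof -
  define a where "a = atheta n k p h \<theta>0"
  define A where "A = Amat n k p h r"
  define F where "F t = (\<Sum>i<n. ln (\<Sum>l<k. exp (a i l + t * A i l))) - (\<Sum>i<n. \<Sum>l<k. \<eta> i l * (a i l + t * A i l))" for t
  have KF: "KLd n k \<eta> (gtheta n k p h (\<lambda>s. \<theta>0 s + (if s = r then t else 0))) = Ent n k \<eta> + F t" for t
    unfolding KLd_eta_gtheta[OF k1 eta] F_def Zf_def atheta_shift[OF r] a_def A_def by simp
  have th0: "(\<lambda>s. \<theta>0 s + (if s = r then 0 else 0)) = \<theta>0" by simp
  have le: "F 0 \<le> F t" for t
  proof -
    have "KLd n k \<eta> (gtheta n k p h (\<lambda>s. \<theta>0 s + (if s = r then 0 else 0))) \<le> KLd n k \<eta> (gtheta n k p h (\<lambda>s. \<theta>0 s + (if s = r then t else 0)))"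
      using min unfolding th0 Gfam_def by auto
    then show ?thesis unfolding KF by simp
  qed
  have Zp: "(\<Sum>l<k. exp (a i l)) > 0" for i using k1 by (intro sum_pos) (auto simp: lessThan_empty_iff)
  define D where "D = (\<Sum>i<n. (\<Sum>l<k. exp (a i l) * A i l) / (\<Sum>l<k. exp (a i l))) - (\<Sum>i<n. \<Sum>l<k. \<eta> i l * A i l)"
  have dF: "(F has_field_derivative D) (at 0)"
    unfolding F_def D_def
    apply (rule derivative_eq_intros refl | simp add: Zp)+
    apply (simp add: mult.commute)
    done
  have "\<forall>y. \<bar>0 - y\<bar> < 1 \<longrightarrow> F 0 \<le> F y" using le by auto
  then have "D = 0" using DERIV_local_min[OF dF, of 1] by simp
  moreover have "(\<Sum>l<k. exp (a i l) * A i l) / (\<Sum>l<k. exp (a i l)) = (\<Sum>l<k. A i l * gtheta n k p h \<theta>0 i l)" for i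
    unfolding gtheta_def a_def by (simp add: sum_divide_distrib mult_ac)
  ultimately show ?thesis unfolding D_def A_def by (simp add: mult_ac)
qed

lemma gtheta_rowsum: "k \<ge> 1 \<Longrightarrow> (\<Sum>l<k. gtheta n k p h \<theta> i l) = 1"
  using Zf_pos[of k n p h \<theta> i] unfolding gtheta_def by (simp add: sum_divide_distrib[symmetric] Zf_def)

lemma KLd_self: "KLd n k \<mu> \<mu> = 0"
  unfolding KLd_def by (auto intro!: sum.neutral)

lemma pyth:
  assumes k1: "k \<ge> 1" and eta: "simplexn n k \<eta>"
    and min: "\<forall>g\<in>Gfam n k p h. KLd n k \<eta> (gtheta n k p h \<theta>0) \<le> KLd n k \<eta> g"
  shows "KLd n k \<eta> (gtheta n k p h \<theta>) = KLd n k \<eta> (gtheta n k p h \<theta>0) + KLd n k (gtheta n k p h \<theta>0) (gtheta n k p h \<theta>)"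
proof -
  let ?g0 = "gtheta n k p h \<theta>0"
  have eq: "(\<Sum>i<n. \<Sum>l<k. \<eta> i l * ln (gtheta n k p h \<theta>' i l)) = (\<Sum>i<n. \<Sum>l<k. ?g0 i l * ln (gtheta n k p h \<theta>' i l))" for \<theta>'
  proof -
    have r1: "(\<Sum>l<k. \<eta> i l) = 1" if "i < n" for i using eta that by (simp add: simplexn_def simplex_def)
    have "(\<Sum>r<p + k. \<theta>' r * (\<Sum>i<n. \<Sum>l<k. Amat n k p h r i l * \<eta> i l)) =
     (\<Sum>r<p + k. \<theta>' r * (\<Sum>i<n. \<Sum>l<k. Amat n k p h r i l * ?g0 i l))"
      by (intro sum.cong refl) (simp add: moment[OF k1 eta min])
    then show ?thesis unfolding sum_ln_gtheta[OF k1] gtheta_rowsum[OF k1]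
      using r1 by simp
  qed
  have etap: "\<forall>i<n. \<forall>l<k. 0 \<le> \<eta> i l" using eta by (auto simp: simplexn_def simplex_def)
  have gp: "0 < gtheta n k p h \<theta>' i l" for \<theta>' i l using gtheta_pos[OF k1] .
  note s1 = KLd_split[of n k \<eta> "gtheta n k p h \<theta>"] and s2 = KLd_split[of n k \<eta> ?g0]
    and s3 = KLd_split[of n k ?g0 "gtheta n k p h \<theta>"] and s4 = KLd_split[of n k ?g0 ?g0]
  show ?thesis using s1 s2 s3 s4 etap gp less_imp_le eq[of \<theta>] eq[of \<theta>0] KLd_self[of n k ?g0]
    by (smt (verit))
qed

definition thb where
  "thb k n p h w b r = (if r < p then real (nrule n h r) * ln (b r * (real k - 1) / (1 - b r)) else real n * ln (w (r - p)))"

lemma ghat_exp: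
  assumes k2: "k \<ge> 2" and n1: "n \<ge> 1" and nr: "\<forall>j<p. nrule n h j \<ge> 1"
    and w: "\<forall>l<k. 0 < w l" and b: "\<forall>j<p. 0 < b j \<and> b j < 1" and l: "l < k"
  shows "ghat k p h w b i l = (\<Prod>j\<in>{j. j < p \<and> h j i \<noteq> None}. (1 - b j) / (real k - 1))
          * exp (atheta n k p h (thb k n p h w b) i l)"
proof -
  let ?S = "{j. j < p \<and> h j i = Some l}"
  let ?T = "{j. j < p \<and> h j i \<noteq> Some l \<and> h j i \<noteq> None}"
  let ?N = "{j. j < p \<and> h j i \<noteq> None}"
  have k1: "real k - 1 > 0" using k2 by simp
  have "atheta n k p h (thb k n p h w b) i l = (\<Sum>j\<in>?S. ln (b j * (real k - 1) / (1 - b j))) + ln (w l)"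
    unfolding atheta_formula[OF l]
  proof (intro arg_cong2[where f="(+)"] sum.cong refl)
    fix j assume "j \<in> ?S"
    then have "real (nrule n h j) \<noteq> 0" using nr by (auto simp: not_le)
    then show "thb k n p h w b j / real (nrule n h j) = ln (b j * (real k - 1) / (1 - b j))"
      using \<open>j \<in> ?S\<close> by (simp add: thb_def)
  next
    show "thb k n p h w b (p + l) / real n = ln (w l)" using n1 by (simp add: thb_def)
  qed
  then have ea: "exp (atheta n k p h (thb k n p h w b) i l) = (\<Prod>j\<in>?S. b j * (real k - 1) / (1 - b j)) * w l"
    using w l b k1 by (simp add: exp_add exp_sum)
  have N: "?N = ?S \<union> ?T" by auto
  have c: "(\<Prod>j\<in>?N. (1 - b j) / (real k - 1)) = (\<Prod>j\<in>?S. (1 - b j) / (real k - 1)) * (\<Prod>j\<in>?T. (1 - b j) / (real k - 1))"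
    unfolding N by (rule prod.union_disjoint) auto
  have "(\<Prod>j\<in>?S. (1 - b j) / (real k - 1)) * (\<Prod>j\<in>?S. b j * (real k - 1) / (1 - b j)) = (\<Prod>j\<in>?S. b j)"
    unfolding prod.distrib[symmetric]
  proof (intro prod.cong refl)
    fix j assume "j \<in> ?S"
    then have "1 - b j \<noteq> 0" using b by auto
    moreover have "real k - 1 \<noteq> 0" using k1 by simp
    ultimately show "(1 - b j) / (real k - 1) * (b j * (real k - 1) / (1 - b j)) = b j" by simp
  qed
  then show ?thesis unfolding ea c ghat_def by (simp add: mult_ac)
qed

lemma gds_rep:
  assumes k2: "k \<ge> 2" and n1: "n \<ge> 1" and nr: "\<forall>j<p. nrule n h j \<ge> 1"
    and w: "\<forall>l<k. 0 < w l" and b: "\<forall>j<p. 0 < b j \<and> b j < 1" and l: "l < k"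
  shows "gds k p h w b i l = gtheta n k p h (thb k n p h w b) i l"
proof -
  let ?c = "(\<Prod>j\<in>{j. j < p \<and> h j i \<noteq> None}. (1 - b j) / (real k - 1))"
  have cp: "?c > 0" using b k2 by (intro prod_pos) auto
  have "(\<Sum>l'<k. ghat k p h w b i l') = ?c * (\<Sum>l'<k. exp (atheta n k p h (thb k n p h w b) i l'))"
    unfolding sum_distrib_left using ghat_exp[OF k2 n1 nr w b] by simp
  then have "gds k p h w b i l = (?c * exp (atheta n k p h (thb k n p h w b) i l)) / (?c * (\<Sum>l'<k. exp (atheta n k p h (thb k n p h w b) i l')))"
    unfolding gds_def ghat_exp[OF k2 n1 nr w b l] by simp
  also have "\<dots> = gtheta n k p h (thb k n p h w b) i l"
  proof -
    have cne: "?c \<noteq> 0" using cp by linarith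
    show ?thesis unfolding gtheta_def by (rule mult_divide_mult_cancel_left[OF cne])
  qed
  finally show ?thesis .
qed

lemma gtheta_shift_eq:
  assumes "k \<ge> 1" "\<forall>l<k. atheta n k p h \<theta>' i l = atheta n k p h \<theta> i l + C" "l < k"
  shows "gtheta n k p h \<theta>' i l = gtheta n k p h \<theta> i l"
proof -
  have "(\<Sum>l'<k. exp (atheta n k p h \<theta>' i l')) = exp C * (\<Sum>l'<k. exp (atheta n k p h \<theta> i l'))"
    unfolding sum_distrib_left using assms(2) by (simp add: exp_add mult_ac)
  then show ?thesis unfolding gtheta_def using assms(2,3) by (simp add: exp_add mult_ac)
qed

lemma gstar_in_Gds:
  assumes k2: "k \<ge> 2" and n1: "n \<ge> 1" and nr: "\<forall>j<p. nrule n h j \<ge> 1"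
  shows "\<exists>g\<in>Gds_open k p h. \<forall>i<n. \<forall>l<k. g i l = gtheta n k p h \<theta>0 i l"
proof -
  define E where "E l = exp (\<theta>0 (p+l) / real n)" for l
  define W where "W = (\<Sum>l<k. E l)"
  define w where "w l = E l / W" for l
  define c where "c j = exp (\<theta>0 j / real (nrule n h j)) / (real k - 1)" for j
  define b where "b j = c j / (1 + c j)" for j
  have k1: "real k - 1 > 0" using k2 by simp
  have Ep: "E l > 0" for l by (simp add: E_def)
  have Wp: "W > 0" unfolding W_def using k2 Ep by (intro sum_pos) (auto simp: lessThan_empty_iff)
  have cp: "c j > 0" for j using k1 by (simp add: c_def)
  have wp: "\<forall>l<k. 0 < w l" using Ep Wp by (simp add: w_def)
  have w1: "\<forall>l<k. w l < 1"
  proof (intro allI impI)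
    fix l assume l: "l < k"
    obtain l' where l': "l' < k" "l' \<noteq> l" 
    proof (cases "l = 0")
      case True then show ?thesis using that[of 1] k2 by simp
    next
      case False then show ?thesis using that[of 0] k2 by simp
    qed
    have "W = E l + (\<Sum>x\<in>{..<k} - {l}. E x)" unfolding W_def using l by (simp add: sum.remove)
    moreover have "(\<Sum>x\<in>{..<k} - {l}. E x) > 0" using l' Ep by (intro sum_pos) auto
    ultimately show "w l < 1" unfolding w_def using Wp by simp
  qed
  have ws: "simplex k w" unfolding simplex_def using wp Wp
    by (auto simp: w_def W_def sum_divide_distrib[symmetric] less_imp_le)
  have bb: "\<forall>j<p. 0 < b j \<and> b j < 1"
  proof (intro allI impI)
    fix j have "0 < c j" by (rule cp)
    then show "0 < b j \<and> b j < 1" by (simp add: b_def field_simps)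
  qed
  let ?g = "gds k p h w b"
  have gin: "?g \<in> Gds_open k p h" unfolding Gds_open_def using ws wp w1 bb by blast
  have "\<forall>i<n. \<forall>l<k. ?g i l = gtheta n k p h \<theta>0 i l"
  proof (intro allI impI)
    fix i l assume i: "i < n" and l: "l < k"
    have sh: "\<forall>l<k. atheta n k p h (thb k n p h w b) i l = atheta n k p h \<theta>0 i l + (- ln W)"
    proof (intro allI impI)
      fix l assume l: "l < k"
      have 1: "thb k n p h w b j / real (nrule n h j) = \<theta>0 j / real (nrule n h j)" if "j \<in> {j. j < p \<and> h j i = Some l}" for j
      proof -
        have jp: "j < p" using that by simp
        have "b j * (real k - 1) / (1 - b j) = c j * (real k - 1)"
          using cp[of j] by (simp add: b_def field_simps)
        also have "\<dots> = exp (\<theta>0 j / real (nrule n h j))" using k1 by (simp add: c_def)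
        finally have "ln (b j * (real k - 1) / (1 - b j)) = \<theta>0 j / real (nrule n h j)" by simp
        moreover have "real (nrule n h j) \<noteq> 0" using nr jp by (auto simp: not_le)
        ultimately show ?thesis using jp by (simp add: thb_def)
      qed
      have 2: "thb k n p h w b (p + l) / real n = \<theta>0 (p + l) / real n - ln W"
        using n1 Ep Wp by (simp add: thb_def w_def ln_div E_def)
      show "atheta n k p h (thb k n p h w b) i l = atheta n k p h \<theta>0 i l + (- ln W)"
      proof -
        have "(\<Sum>j\<in>{j. j < p \<and> h j i = Some l}. thb k n p h w b j / real (nrule n h j)) =
              (\<Sum>j\<in>{j. j < p \<and> h j i = Some l}. \<theta>0 j / real (nrule n h j))"
          by (rule sum.cong[OF refl 1])
        then show ?thesis unfolding atheta_formula[OF l] 2 by simp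
      qed
    qed
    show "?g i l = gtheta n k p h \<theta>0 i l"
      unfolding gds_rep[OF k2 n1 nr wp bb l] using gtheta_shift_eq[OF _ sh l] k2 by simp
  qed
  then show ?thesis using gin by blast
qed

lemma bstar_class:
  assumes "l < k"
  shows "bstar n k p h \<eta> (p + l) = (\<Sum>i<n. \<eta> i l) / real n"
proof -
  have "bstar n k p h \<eta> (p + l) = (\<Sum>i<n. \<Sum>l'<k. if l' = l then \<eta> i l / real n else 0)"
    unfolding bstar_def by (intro sum.cong refl) (auto simp: Amat_def)
  then show ?thesis using assms by (simp add: sum_divide_distrib)
qed

lemma bstar_simplex:
  assumes "n \<ge> 1" "simplexn n k \<eta>"
  shows "(\<Sum>l<k. bstar n k p h \<eta> (p + l)) = 1"
proof -
  have "(\<Sum>l<k. bstar n k p h \<eta> (p + l)) = (\<Sum>l<k. (\<Sum>i<n. \<eta> i l) / real n)"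
    by (intro sum.cong refl) (simp add: bstar_class)
  also have "\<dots> = (\<Sum>i<n. \<Sum>l<k. \<eta> i l) / real n"
    by (simp add: sum_divide_distrib[symmetric] sum.swap[of _ "{..<k}"])
  also have "(\<Sum>i<n. \<Sum>l<k. \<eta> i l) = (\<Sum>i<n. 1::real)"
    using assms(2) by (intro sum.cong refl) (simp add: simplexn_def simplex_def)
  finally show ?thesis using assms(1) by simp
qed

theorem lemma6:
  fixes n k p :: nat
    and h :: "nat \<Rightarrow> nat \<Rightarrow> nat option"
    and \<eta> gstar :: "nat \<Rightarrow> nat \<Rightarrow> real"
  assumes "n \<ge> 1" and "k \<ge> 2" and "p \<ge> 1"
    and "\<forall>j<p. \<forall>i<n. \<forall>l. h j i = Some l \<longrightarrow> l < k"
    and "\<forall>j<p. nrule n h j \<ge> 1"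
    and "simplexn n k \<eta>"
    and "gstar \<in> Gfam n k p h"
    and "\<forall>g\<in>Gfam n k p h. KLd n k \<eta> gstar \<le> KLd n k \<eta> g"
  shows "(INF g\<in>Gds_open k p h. KLd n k \<eta> g) = KLd n k \<eta> gstar
    \<and> (\<forall>g\<in>Gds_open k p h. KLd n k \<eta> g = KLd n k \<eta> gstar + KLd n k gstar g)
    \<and> ((\<forall>j<p. 0 < bstar n k p h \<eta> j \<and> bstar n k p h \<eta> j < 1)
        \<and> (\<forall>l<k. 0 < bstar n k p h \<eta> (p + l) \<and> bstar n k p h \<eta> (p + l) < 1)
       \<longrightarrow> (let gdsstar = gds k p h (\<lambda>l. bstar n k p h \<eta> (p + l)) (bstar n k p h \<eta>)
            in (\<forall>g\<in>Gds_open k p h.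
                  KLd n k gstar g = (KLd n k \<eta> gdsstar - KLd n k \<eta> gstar)
                                    + (KLd n k \<eta> g - KLd n k \<eta> gdsstar))
               \<and> KLd n k \<eta> gdsstar - KLd n k \<eta> gstar \<ge> 0))"
proof -
  note n1 = assms(1) and k2 = assms(2) and nr = assms(5) and eta = assms(6)
  have k1: "k \<ge> 1" using k2 by simp
  obtain \<theta>0 where g0: "gstar = gtheta n k p h \<theta>0" using assms(7) unfolding Gfam_def by auto
  have min: "\<forall>g\<in>Gfam n k p h. KLd n k \<eta> (gtheta n k p h \<theta>0) \<le> KLd n k \<eta> g"
    using assms(8) g0 by simp
  have P: "KLd n k \<eta> g = KLd n k \<eta> gstar + KLd n k gstar g \<and> KLd n k \<eta> gstar \<le> KLd n k \<eta> g"
    if gin: "g \<in> Gds_open k p h" for g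
  proof -
    obtain w b where g: "g = gds k p h w b" and w: "\<forall>l<k. 0 < w l" and b: "\<forall>j<p. 0 < b j \<and> b j < 1"
      using gin unfolding Gds_open_def by blast
    let ?t = "thb k n p h w b"
    have ag: "\<forall>i<n. \<forall>l<k. g i l = gtheta n k p h ?t i l"
      using gds_rep[OF k2 n1 nr w b] g by simp
    have e1: "KLd n k \<eta> g = KLd n k \<eta> (gtheta n k p h ?t)" by (rule KLd_cong2[OF ag])
    have e2: "KLd n k gstar g = KLd n k gstar (gtheta n k p h ?t)" by (rule KLd_cong2[OF ag])
    have "gtheta n k p h ?t \<in> Gfam n k p h" unfolding Gfam_def by simp
    then show ?thesis using pyth[OF k1 eta min, of ?t] min e1 e2 unfolding g0 by auto
  qed
  have I: "(INF g\<in>Gds_open k p h. KLd n k \<eta> g) = KLd n k \<eta> gstar"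
  proof -
    obtain g1 where g1: "g1 \<in> Gds_open k p h" "\<forall>i<n. \<forall>l<k. g1 i l = gtheta n k p h \<theta>0 i l"
      using gstar_in_Gds[OF k2 n1 nr] by blast
    have "KLd n k \<eta> g1 = KLd n k \<eta> gstar" unfolding g0 by (rule KLd_cong2[OF g1(2)])
    then have "KLd n k \<eta> gstar \<in> (\<lambda>g. KLd n k \<eta> g) ` Gds_open k p h" using g1(1) by (metis image_eqI)
    then show ?thesis by (rule cInf_eq_minimum) (use P in force)
  qed
  have III: "KLd n k \<eta> (gds k p h (\<lambda>l. bstar n k p h \<eta> (p + l)) (bstar n k p h \<eta>)) - KLd n k \<eta> gstar \<ge> 0"
    if h1: "\<forall>j<p. 0 < bstar n k p h \<eta> j \<and> bstar n k p h \<eta> j < 1"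
      and h2: "\<forall>l<k. 0 < bstar n k p h \<eta> (p + l) \<and> bstar n k p h \<eta> (p + l) < 1"
  proof -
    have "simplex k (\<lambda>l. bstar n k p h \<eta> (p + l))"
      unfolding simplex_def using h2 bstar_simplex[OF n1 eta] by (auto simp: less_imp_le)
    then have "gds k p h (\<lambda>l. bstar n k p h \<eta> (p + l)) (bstar n k p h \<eta>) \<in> Gds_open k p h"
      unfolding Gds_open_def using h1 h2 by blast
    then show ?thesis using P by fastforce
  qed
  show ?thesis using I P III by (auto simp: Let_def)
qed

end
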